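(* Let $N=\{n_1,\dots,n_m\}$ be a finite validator set ($m\ge 1$) in which validator $n_i$ has staked tokens $s_i>0$. Let $\rho_{\mathbb{N}_L}$ and $\rho_{\mathbb{N}_S}$ be the Nakamoto coefficients for liveness and safety of $N$ under the linear stake-weight model ($w_i=s_i$), and let $\rho^*_{\mathbb{N}_L}$ and $\rho^*_{\mathbb{N}_S}$ be those under the Square Root Stake Weight (SRSW) model ($w^*_i=\sqrt{s_i}$). Then $\rho^*_{\mathbb{N}_L}\ge \rho_{\mathbb{N}_L}$ and $\rho^*_{\mathbb{N}_S}\ge \rho_{\mathbb{N}_S}$.
   Context: Weighted consensus: each validator $n_i$ has a weight $w_i>0$ and $W=\sum_{i=1}^m w_i$. A quorum is $\mathbb{Q}=\tfrac{2}{3}W$. Nakamoto coefficient for liveness: $\mathbb{N}_L=\min\{|L| : L\subseteq N,\ \sum_{i\in L} w_i\ge \tfrac13 W\}$ and $\rho_{\mathbb{N}_L}=100\,\mathbb{N}_L/m$. Nakamoto coefficient for safety: $\mathbb{N}_S=\min\{|S| : S\subseteq N,\ \sum_{i\in S} w_i\ge \mathbb{Q}\}$ and $\rho_{\mathbb{N}_S}=\mathbb{N}_S/m$. In the linear model $w_i=s_i$; in the SRSW model $w_i=\sqrt{s_i}$; the coefficients for a model are computed with that model's weights. *)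

theory Defs
  imports Complex_Main
begin

definition total_weight :: "('a \<Rightarrow> real) \<Rightarrow> 'a set \<Rightarrow> real" where
  "total_weight w N = (\<Sum>i\<in>N. w i)"

definition nakamoto_liveness :: "('a \<Rightarrow> real) \<Rightarrow> 'a set \<Rightarrow> nat" where
  "nakamoto_liveness w N =
     Min {card L | L. L \<subseteq> N \<and> (\<Sum>i\<in>L. w i) \<ge> total_weight w N / 3}"

definition nakamoto_safety :: "('a \<Rightarrow> real) \<Rightarrow> 'a set \<Rightarrow> nat" where
  "nakamoto_safety w N =
     Min {card S | S. S \<subseteq> N \<and> (\<Sum>i\<in>S. w i) \<ge> 2 / 3 * total_weight w N}"

definition rho_liveness :: "('a \<Rightarrow> real) \<Rightarrow> 'a set \<Rightarrow> real" where
  "rho_liveness w N = 100 * real (nakamoto_liveness w N) / real (card N)"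

definition rho_safety :: "('a \<Rightarrow> real) \<Rightarrow> 'a set \<Rightarrow> real" where
  "rho_safety w N = real (nakamoto_safety w N) / real (card N)"

definition linear_weight :: "('a \<Rightarrow> real) \<Rightarrow> 'a \<Rightarrow> real" where
  "linear_weight s = s"

definition srsw_weight :: "('a \<Rightarrow> real) \<Rightarrow> 'a \<Rightarrow> real" where
  "srsw_weight s = (\<lambda>i. sqrt (s i))"

end

theory Submission
  imports Defs
begin

lemma arith_key:
  fixes A B C D a :: real
  assumes "A \<ge> a * (A + B)" "A * D \<le> C * B" "B \<ge> 0" "D \<ge> 0" "C \<ge> 0" "a \<le> 1"
    "B = 0 \<Longrightarrow> D = 0"
  shows "C \<ge> a * (C + D)"
proof (cases "B = 0")
  case True
  have "(1 - a) * C \<ge> 0" using assms by simp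
  then show ?thesis using True assms by (simp add: algebra_simps)
next
  case False
  hence Bp: "B > 0" using assms by simp
  have "(1 - a) * A \<ge> a * B" using assms(1) by (simp add: algebra_simps)
  hence "(1 - a) * A * D \<ge> a * B * D" using assms(4) by (simp add: mult_right_mono)
  moreover have "(1 - a) * (A * D) \<le> (1 - a) * (C * B)" using assms(2,6) by (simp add: mult_left_mono)
  ultimately have "B * ((1 - a) * C - a * D) \<ge> 0" by (simp add: algebra_simps)
  hence "(1 - a) * C - a * D \<ge> 0" using Bp by (simp add: zero_le_mult_iff)
  then show ?thesis by (simp add: algebra_simps)
qed

lemma key:
  fixes N L :: "'a set" and s :: "'a \<Rightarrow> real" and a :: real
  assumes fin: "finite N" and pos: "\<And>i. i \<in> N \<Longrightarrow> s i > 0" and LN: "L \<subseteq> N"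
    and a1: "a \<le> 1" and hL: "(\<Sum>i\<in>L. sqrt (s i)) \<ge> a * (\<Sum>i\<in>N. sqrt (s i))"
  shows "\<exists>T. T \<subseteq> N \<and> card T = card L \<and> (\<Sum>i\<in>T. s i) \<ge> a * (\<Sum>i\<in>N. s i)"
proof -
  define f where "f T = (\<Sum>i\<in>T. sqrt (s i))" for T
  define K where "K = {T. T \<subseteq> N \<and> card T = card L}"
  have finK: "finite K" unfolding K_def using fin by simp
  have LK: "L \<in> K" unfolding K_def using LN by simp
  have "Max (f ` K) \<in> f ` K" using finK LK by (intro Max_in) auto
  then obtain T where TK: "T \<in> K" and TM: "f T = Max (f ` K)" by auto
  have maxT: "f T' \<le> f T" if "T' \<in> K" for T' using TM finK that by simp
  have TN: "T \<subseteq> N" and cT: "card T = card L" using TK unfolding K_def by auto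
  have finT: "finite T" using TN fin finite_subset by blast
  define R where "R = N - T"
  have finR: "finite R" using fin R_def by simp
  have top: "s r \<le> s t" if t: "t \<in> T" and r: "r \<in> R" for t r
  proof (rule ccontr)
    assume "\<not> s r \<le> s t"
    hence lt: "s t < s r" by simp
    have tN: "t \<in> N" using t TN by auto
    have rnT: "r \<notin> T" and rN: "r \<in> N" using r R_def by auto
    define T' where "T' = insert r (T - {t})"
    have "card T' = card T" unfolding T'_def using finT t rnT
      by (simp add: card_insert_if) (metis One_nat_def Suc_pred card_gt_0_iff empty_iff)
    hence T'K: "T' \<in> K" unfolding K_def T'_def using TN rN cT by auto
    have "f T' = sqrt (s r) + (f T - sqrt (s t))" unfolding T'_def f_def
      using finT t rnT by (simp add: sum_diff1)
    moreover have "sqrt (s t) < sqrt (s r)" using lt by simp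
    ultimately have "f T' > f T" by simp
    with maxT[OF T'K] show False by simp
  qed
  define A where "A = (\<Sum>i\<in>T. sqrt (s i))"
  define B where "B = (\<Sum>i\<in>R. sqrt (s i))"
  define C where "C = (\<Sum>i\<in>T. s i)"
  define D where "D = (\<Sum>i\<in>R. s i)"
  have splitq: "(\<Sum>i\<in>N. sqrt (s i)) = B + A" unfolding A_def B_def R_def
    using fin TN by (simp add: sum.subset_diff)
  have splits: "(\<Sum>i\<in>N. s i) = D + C" unfolding C_def D_def R_def
    using fin TN by (simp add: sum.subset_diff)
  have posT: "\<And>i. i \<in> T \<Longrightarrow> s i > 0" using pos TN by auto
  have posR: "\<And>i. i \<in> R \<Longrightarrow> s i > 0" using pos R_def by auto
  have pair: "sqrt (s t) * s r \<le> s t * sqrt (s r)" if "t \<in> T" "r \<in> R" for t r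
  proof -
    have st: "s t > 0" and sr: "s r > 0" using posT posR that by auto
    have le: "sqrt (s r) \<le> sqrt (s t)" using top[OF that] by simp
    have e1: "sqrt (s t) * s r = sqrt (s t) * sqrt (s r) * sqrt (s r)" using sr
      by (simp add: mult.assoc)
    have e2: "s t * sqrt (s r) = sqrt (s t) * sqrt (s r) * sqrt (s t)" using st
      by (simp add: mult.commute mult.left_commute)
    have "sqrt (s t) * sqrt (s r) * sqrt (s r) \<le> sqrt (s t) * sqrt (s r) * sqrt (s t)"
      using le st sr by (intro mult_left_mono) auto
    thus ?thesis by (simp only: e1 e2)
  qed
  have AD: "A * D \<le> C * B" unfolding A_def B_def C_def D_def sum_product
    by (intro sum_mono) (use pair in auto)
  have B0: "B \<ge> 0" unfolding B_def using posR by (simp add: sum_nonneg less_imp_le)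
  have D0: "D \<ge> 0" unfolding D_def using posR by (simp add: sum_nonneg less_imp_le)
  have C0: "C \<ge> 0" unfolding C_def using posT by (simp add: sum_nonneg less_imp_le)
  have BD: "D = 0" if "B = 0"
  proof -
    have "R = {}"
    proof (rule ccontr)
      assume "R \<noteq> {}"
      then obtain r where "r \<in> R" by auto
      hence "0 < B" unfolding B_def using finR posR
        by (intro sum_pos2[where i=r]) (auto simp: less_imp_le)
      with that show False by simp
    qed
    thus ?thesis unfolding D_def by simp
  qed
  have "f L \<le> f T" using maxT LK .
  hence "A \<ge> a * (A + B)" using hL splitq unfolding f_def A_def by (simp add: add.commute)
  hence "C \<ge> a * (C + D)" using arith_key AD B0 D0 C0 a1 BD by blast
  hence "(\<Sum>i\<in>T. s i) \<ge> a * (\<Sum>i\<in>N. s i)" using splits C_def by (simp add: add.commute)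
  thus ?thesis using TN cT by blast
qed

lemma minle:
  fixes N :: "'a set" and s :: "'a \<Rightarrow> real" and a :: real
  assumes fin: "finite N" and pos: "\<And>i. i \<in> N \<Longrightarrow> s i > 0" and a1: "a \<le> 1"
  shows "Min {card L | L. L \<subseteq> N \<and> (\<Sum>i\<in>L. s i) \<ge> a * (\<Sum>i\<in>N. s i)}
       \<le> Min {card L | L. L \<subseteq> N \<and> (\<Sum>i\<in>L. sqrt (s i)) \<ge> a * (\<Sum>i\<in>N. sqrt (s i))}"
proof -
  let ?S1 = "{card L | L. L \<subseteq> N \<and> (\<Sum>i\<in>L. s i) \<ge> a * (\<Sum>i\<in>N. s i)}"
  let ?S2 = "{card L | L. L \<subseteq> N \<and> (\<Sum>i\<in>L. sqrt (s i)) \<ge> a * (\<Sum>i\<in>N. sqrt (s i))}"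
  have fin1: "finite ?S1" and fin2: "finite ?S2"
    using fin by (auto intro: finite_subset[of _ "card ` Pow N"])
  have nn: "(\<Sum>i\<in>N. sqrt (s i)) \<ge> 0" using pos by (simp add: sum_nonneg less_imp_le)
  have "(1 - a) * (\<Sum>i\<in>N. sqrt (s i)) \<ge> 0" using a1 nn by simp
  hence "a * (\<Sum>i\<in>N. sqrt (s i)) \<le> (\<Sum>i\<in>N. sqrt (s i))" by (simp add: algebra_simps)
  hence "card N \<in> ?S2"  by (auto intro!: exI[of _ N])
  hence "Min ?S2 \<in> ?S2" using fin2 by (intro Min_in) auto
  then obtain L where LN: "L \<subseteq> N" and hL: "(\<Sum>i\<in>L. sqrt (s i)) \<ge> a * (\<Sum>i\<in>N. sqrt (s i))"
    and eq: "Min ?S2 = card L" by auto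
  obtain T where "T \<subseteq> N" "card T = card L" "(\<Sum>i\<in>T. s i) \<ge> a * (\<Sum>i\<in>N. s i)"
    using key[OF fin pos LN a1 hL] by blast
  hence "card L \<in> ?S1" by (metis (mono_tags, lifting) mem_Collect_eq)
  hence "Min ?S1 \<le> card L" using fin1 by simp
  thus ?thesis using eq by simp
qed

theorem lemma1:
  fixes N :: "'a set" and s :: "'a \<Rightarrow> real"
  assumes "finite N" and "N \<noteq> {}"
    and "\<And>i. i \<in> N \<Longrightarrow> s i > 0"
  shows "rho_liveness (srsw_weight s) N \<ge> rho_liveness (linear_weight s) N
       \<and> rho_safety (srsw_weight s) N \<ge> rho_safety (linear_weight s) N"
proof -
  have cN: "real (card N) > 0" using assms(1,2) by (simp add: card_gt_0_iff)
  have l: "nakamoto_liveness (linear_weight s) N \<le> nakamoto_liveness (srsw_weight s) N"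
    using minle[OF assms(1,3), where a="1/3"]
    unfolding nakamoto_liveness_def total_weight_def linear_weight_def srsw_weight_def
    by simp
  have sf: "nakamoto_safety (linear_weight s) N \<le> nakamoto_safety (srsw_weight s) N"
    using minle[OF assms(1,3), where a="2/3"]
    unfolding nakamoto_safety_def total_weight_def linear_weight_def srsw_weight_def
    by simp
  show ?thesis unfolding rho_liveness_def rho_safety_def
    using l sf cN by (auto intro!: divide_right_mono)
qed

end
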